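(* Let $S$ be a vector space over a field $\Bbbk$ and let $\nu:S\setminus\{0\}\to C$ and $\nu':S\setminus\{0\}\to C'$ be well-ordered injective valuations. Put $C_\nu=\nu(S\setminus\{0\})$, $C_{\nu'}=\nu'(S\setminus\{0\})$ and define $$\mathbf K_{\nu',\nu}(a)=\min\{\nu'(x): x\in S\setminus\{0\},\ \nu(x)=a\}\quad (a\in C_\nu),$$ and symmetrically $\mathbf K_{\nu,\nu'}:C_{\nu'}\to C_\nu$. Then $\mathbf K_{\nu',\nu}:C_\nu\to C_{\nu'}$ and $\mathbf K_{\nu,\nu'}:C_{\nu'}\to C_\nu$ are well-defined and mutually inverse bijections. Moreover, there exists a basis $\mathbf B$ of $S$ adapted to both $\nu$ and $\nu'$ such that $\mathbf K_{\nu',\nu}(\nu(b))=\nu'(b)$ for all $b\in\mathbf B$.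
   Context: A valuation on a $\Bbbk$-vector space $S$ with values in a totally ordered set $(C,\le)$ is a map $\nu:S\setminus\{0\}\to C$ such that $\nu(cx)=\nu(x)$ for all $c\in\Bbbk^\times$, $x\ne0$, and $\nu(x+y)\le\max(\nu(x),\nu(y))$ whenever $x,y,x+y\neq 0$. It is well-ordered if its image $\nu(S\setminus\{0\})$ is a well-ordered subset of $C$. It is injective if there is a basis $\mathbf B$ of $S$ such that $\nu|_{\mathbf B}$ is injective; such a basis is called adapted to $\nu$ (then $\nu|_{\mathbf B}$ is a bijection onto $\nu(S\setminus\{0\})$ and $\nu(x)$ is the maximum of $\nu(b)$ over the $b$ occurring in the expansion of $x$). *)

theory Defs
  imports Main "HOL.Vector_Spaces"
begin

text \<open>A vector space: the whole type 'v with scalar multiplication scale over the field 'k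
  (locale vector_space from HOL.Vector_Spaces). Valuations are functions on 'v; only their
  values on nonzero vectors matter.\<close>

definition is_valuation :: "('k::field \<Rightarrow> 'v::ab_group_add \<Rightarrow> 'v) \<Rightarrow> ('v \<Rightarrow> 'c::linorder) \<Rightarrow> bool" where
  "is_valuation scale \<nu> \<longleftrightarrow>
     (\<forall>c x. c \<noteq> 0 \<and> x \<noteq> 0 \<longrightarrow> \<nu> (scale c x) = \<nu> x) \<and>
     (\<forall>x y. x \<noteq> 0 \<and> y \<noteq> 0 \<and> x + y \<noteq> 0 \<longrightarrow> \<nu> (x + y) \<le> max (\<nu> x) (\<nu> y))"

definition val_image :: "('v::zero \<Rightarrow> 'c) \<Rightarrow> 'c set" where
  "val_image \<nu> = \<nu> ` (UNIV - {0})"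

definition well_ordered_set :: "'c::linorder set \<Rightarrow> bool" where
  "well_ordered_set A \<longleftrightarrow> (\<forall>X. X \<subseteq> A \<and> X \<noteq> {} \<longrightarrow> (\<exists>m\<in>X. \<forall>a\<in>X. m \<le> a))"

definition well_ordered_valuation :: "('v::zero \<Rightarrow> 'c::linorder) \<Rightarrow> bool" where
  "well_ordered_valuation \<nu> \<longleftrightarrow> well_ordered_set (val_image \<nu>)"

definition is_basis :: "('k::field \<Rightarrow> 'v::ab_group_add \<Rightarrow> 'v) \<Rightarrow> 'v set \<Rightarrow> bool" where
  "is_basis scale B \<longleftrightarrow> \<not> module.dependent scale B \<and> module.span scale B = UNIV"

definition adapted_basis :: "('k::field \<Rightarrow> 'v::ab_group_add \<Rightarrow> 'v) \<Rightarrow> ('v \<Rightarrow> 'c) \<Rightarrow> 'v set \<Rightarrow> bool" where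
  "adapted_basis scale \<nu> B \<longleftrightarrow> is_basis scale B \<and> inj_on \<nu> B"

definition injective_valuation :: "('k::field \<Rightarrow> 'v::ab_group_add \<Rightarrow> 'v) \<Rightarrow> ('v \<Rightarrow> 'c) \<Rightarrow> bool" where
  "injective_valuation scale \<nu> \<longleftrightarrow> (\<exists>B. adapted_basis scale \<nu> B)"

definition is_min_of :: "'c::linorder \<Rightarrow> 'c set \<Rightarrow> bool" where
  "is_min_of m A \<longleftrightarrow> m \<in> A \<and> (\<forall>a\<in>A. m \<le> a)"

definition fibre_vals :: "('v::zero \<Rightarrow> 'd) \<Rightarrow> ('v \<Rightarrow> 'c) \<Rightarrow> 'c \<Rightarrow> 'd set" where
  "fibre_vals \<nu>' \<nu> a = {\<nu>' x | x. x \<noteq> 0 \<and> \<nu> x = a}"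

definition Kmap :: "('v::zero \<Rightarrow> 'd::linorder) \<Rightarrow> ('v \<Rightarrow> 'c) \<Rightarrow> 'c \<Rightarrow> 'd" where
  "Kmap \<nu>' \<nu> a = (THE m. is_min_of m (fibre_vals \<nu>' \<nu> a))"

end

theory Submission
  imports Defs
begin

context vector_space begin

lemma val_scale: "is_valuation scale \<nu> \<Longrightarrow> c \<noteq> 0 \<Longrightarrow> x \<noteq> 0 \<Longrightarrow> \<nu> (scale c x) = \<nu> x"
  unfolding is_valuation_def by blast

lemma val_neg: "is_valuation scale \<nu> \<Longrightarrow> x \<noteq> 0 \<Longrightarrow> \<nu> (- x) = \<nu> x"
  using val_scale[of \<nu> "-1" x] by simp

lemma val_add: "is_valuation scale \<nu> \<Longrightarrow> x \<noteq> 0 \<Longrightarrow> y \<noteq> 0 \<Longrightarrow> x + y \<noteq> 0 \<Longrightarrow> \<nu> (x + y) \<le> max (\<nu> x) (\<nu> y)"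
  unfolding is_valuation_def by blast

lemma val_add_lt:
  fixes \<nu> :: "'b \<Rightarrow> 'c::linorder"
  assumes v: "is_valuation scale \<nu>" and x: "x \<noteq> 0" and y: "y \<noteq> 0" and lt: "\<nu> y < \<nu> x"
  shows "x + y \<noteq> 0 \<and> \<nu> (x + y) = \<nu> x"
proof -
  have ne: "x + y \<noteq> 0"
  proof
    assume "x + y = 0" then have "y = - x" by (simp add: add_eq_0_iff)
    then show False using lt val_neg[OF v x] by simp
  qed
  have "\<nu> x = \<nu> ((x + y) + (- y))" by simp
  also have "\<dots> \<le> max (\<nu> (x + y)) (\<nu> (- y))"
    using val_add[OF v ne, of "- y"] x y by simp
  finally have "\<nu> x \<le> max (\<nu> (x + y)) (\<nu> y)" using val_neg[OF v y] by simp
  then have "\<nu> x \<le> \<nu> (x + y)" using lt by (auto simp: max_def split: if_splits)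
  moreover have "\<nu> (x + y) \<le> \<nu> x" using val_add[OF v x y ne] lt by simp
  ultimately show ?thesis using ne by simp
qed

lemma val_add_distinct:
  fixes \<nu> :: "'b \<Rightarrow> 'c::linorder"
  assumes v: "is_valuation scale \<nu>" and x: "x \<noteq> 0" and y: "y \<noteq> 0" and d: "\<nu> x \<noteq> \<nu> y"
  shows "x + y \<noteq> 0 \<and> \<nu> (x + y) = max (\<nu> x) (\<nu> y)"
proof (cases "\<nu> y < \<nu> x")
  case True then show ?thesis using val_add_lt[OF v x y] by simp
next
  case False then have "\<nu> x < \<nu> y" using d by simp
  then show ?thesis using val_add_lt[OF v y x] by (simp add: add.commute)
qed


lemma val_sum:
  fixes \<nu> :: "'b \<Rightarrow> 'c::linorder"
  assumes v: "is_valuation scale \<nu>" and "finite T" "T \<noteq> {}"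
  shows "(\<forall>t\<in>T. u t \<noteq> 0 \<and> t \<noteq> 0) \<longrightarrow> inj_on \<nu> T \<longrightarrow>
     (\<Sum>t\<in>T. scale (u t) t) \<noteq> 0 \<and> \<nu> (\<Sum>t\<in>T. scale (u t) t) = Max (\<nu> ` T)"
  using assms(2,3)
proof (induction T rule: finite_ne_induct)
  case (singleton t)
  show ?case
  proof (intro impI)
    assume "\<forall>s\<in>{t}. u s \<noteq> 0 \<and> s \<noteq> 0"
    then have "u t \<noteq> 0" "t \<noteq> 0" by auto
    then show "(\<Sum>s\<in>{t}. scale (u s) s) \<noteq> 0 \<and> \<nu> (\<Sum>s\<in>{t}. scale (u s) s) = Max (\<nu> ` {t})"
      using val_scale[OF v] by simp
  qed
next
  case (insert t F)
  show ?case
  proof (intro impI)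
    assume nz: "\<forall>s\<in>insert t F. u s \<noteq> 0 \<and> s \<noteq> 0" and inj: "inj_on \<nu> (insert t F)"
    let ?s = "\<Sum>s\<in>F. scale (u s) s"
    have nzF: "\<forall>s\<in>F. u s \<noteq> 0 \<and> s \<noteq> 0" using nz by blast
    have injF: "inj_on \<nu> F" using inj by (rule inj_on_subset) blast
    have IH: "?s \<noteq> 0 \<and> \<nu> ?s = Max (\<nu> ` F)" using insert.IH nzF injF by blast
    have "Max (\<nu> ` F) \<in> \<nu> ` F" using insert.hyps(1,2) by simp
    then obtain f where f: "f \<in> F" and fe: "Max (\<nu> ` F) = \<nu> f" by blast
    have tf: "t \<noteq> f" using f insert.hyps(3) by blast
    have "\<nu> t \<noteq> \<nu> f" using inj_on_contraD[OF inj tf] f by blast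
    moreover have tn: "scale (u t) t \<noteq> 0" and tv: "\<nu> (scale (u t) t) = \<nu> t"
      using nz val_scale[OF v] by auto
    ultimately have "\<nu> (scale (u t) t) \<noteq> \<nu> ?s" using IH fe by simp
    then have R: "scale (u t) t + ?s \<noteq> 0 \<and> \<nu> (scale (u t) t + ?s) = max (\<nu> t) (\<nu> ?s)"
      using val_add_distinct[OF v tn, of ?s] IH tv by simp
    have S: "(\<Sum>s\<in>insert t F. scale (u s) s) = scale (u t) t + ?s"
      using insert.hyps(1,3) by (rule sum.insert)
    have M: "Max (\<nu> ` insert t F) = max (\<nu> t) (Max (\<nu> ` F))"
      using insert.hyps(1,2) by simp
    show "(\<Sum>s\<in>insert t F. scale (u s) s) \<noteq> 0 \<and> \<nu> (\<Sum>s\<in>insert t F. scale (u s) s) = Max (\<nu> ` insert t F)"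
      unfolding S M using R IH by simp
  qed
qed

lemma low_diff:
  fixes \<nu> :: "'b \<Rightarrow> 'c::linorder"
  assumes v: "is_valuation scale \<nu>"
    and x: "x = 0 \<or> \<nu> x < a" and y: "y = 0 \<or> \<nu> y < a"
  shows "x - scale e y = 0 \<or> \<nu> (x - scale e y) < a"
proof -
  define z where "z = - scale e y"
  have y': "z = 0 \<or> \<nu> z < a"
  proof (cases "e = 0 \<or> y = 0")
    case True then show ?thesis unfolding z_def by auto
  next
    case False
    then have "\<nu> z = \<nu> y" unfolding z_def using val_neg[OF v] val_scale[OF v, of e y] by simp
    then show ?thesis using y False by simp
  qed
  have "x + z = 0 \<or> \<nu> (x + z) < a"
  proof (cases "x = 0")
    case True then show ?thesis using y' by simp
  next
    case xn: False
    show ?thesis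
    proof (cases "z = 0")
      case True then show ?thesis using x by simp
    next
      case zn: False
      show ?thesis
      proof (cases "x + z = 0")
        case False2: False
        have le: "\<nu> (x + z) \<le> max (\<nu> x) (\<nu> z)"
          using val_add[OF v xn zn False2] .
        have "\<nu> x < a" using x xn by simp
        moreover have "\<nu> z < a" using y' zn by simp
        ultimately have "max (\<nu> x) (\<nu> z) < a" by simp
        then have "\<nu> (x + z) < a" using le by (rule le_less_trans[rotated])
        then show ?thesis by (rule disjI2)
      qed (rule disjI1)
    qed
  qed
  then show ?thesis unfolding z_def by simp
qed

lemma decomp:
  fixes \<nu> :: "'b \<Rightarrow> 'c::linorder"
  assumes v: "is_valuation scale \<nu>" and B: "adapted_basis scale \<nu> B" and x: "x \<noteq> 0"
  shows "\<exists>b0\<in>B. \<exists>c. c \<noteq> 0 \<and> \<nu> b0 = \<nu> x \<and> (x - scale c b0 = 0 \<or> \<nu> (x - scale c b0) < \<nu> x)"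
proof -
  have sp: "span B = UNIV" and ind: "\<not> dependent B" and inj: "inj_on \<nu> B"
    using B unfolding adapted_basis_def is_basis_def by auto
  have B0: "0 \<notin> B" using ind dependent_zero by blast
  have "x \<in> span B" using sp by simp
  then obtain t r where t: "finite t" "t \<subseteq> B" and xs: "x = (\<Sum>a\<in>t. scale (r a) a)"
    unfolding span_explicit by blast
  define T where "T = {a\<in>t. r a \<noteq> 0}"
  have xT: "x = (\<Sum>a\<in>T. scale (r a) a)" unfolding xs T_def
    by (rule sum.mono_neutral_right) (use t in auto)
  have fT: "finite T" "T \<subseteq> B" using t T_def by auto
  have TN: "T \<noteq> {}" using x xT by auto
  have nz: "\<forall>a\<in>T. r a \<noteq> 0 \<and> a \<noteq> 0" using T_def B0 fT by auto
  have injT: "inj_on \<nu> T" using inj fT inj_on_subset by blast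
  have vx: "\<nu> x = Max (\<nu> ` T)" using val_sum[OF v fT(1) TN, of r] nz injT xT by simp
  have "Max (\<nu> ` T) \<in> \<nu> ` T" using fT TN by simp
  then obtain b0 where b0: "b0 \<in> T" "\<nu> b0 = \<nu> x" using vx by auto
  have rem: "x - scale (r b0) b0 = (\<Sum>a\<in>T - {b0}. scale (r a) a)"
    using xT sum.remove[OF fT(1) b0(1), of "\<lambda>a. scale (r a) a"] by simp
  have "x - scale (r b0) b0 = 0 \<or> \<nu> (x - scale (r b0) b0) < \<nu> x"
  proof (cases "T - {b0} = {}")
    case True
    have "x - scale (r b0) b0 = 0" unfolding rem True by (rule sum.empty)
    then show ?thesis by (rule disjI1)
  next
    case False
    have fT': "finite (T - {b0})" using fT by simp
    have e1: "\<nu> (x - scale (r b0) b0) = Max (\<nu> ` (T - {b0}))"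
      using val_sum[OF v fT' False, of r] nz injT rem by (auto intro: inj_on_subset)
    have "Max (\<nu> ` (T - {b0})) \<in> \<nu> ` (T - {b0})" using fT' False by simp
    then obtain b1 where b1: "b1 \<in> T - {b0}" and e2: "Max (\<nu> ` (T - {b0})) = \<nu> b1" by blast
    have "\<nu> b1 \<in> \<nu> ` T" using b1 by blast
    then have le: "\<nu> b1 \<le> \<nu> x" unfolding vx using Max_ge[OF finite_imageI[OF fT(1)]] by blast
    have b1T: "b1 \<in> T" and b10: "b1 \<noteq> b0" using b1 by auto
    have ne: "\<nu> b1 \<noteq> \<nu> b0" using inj_on_contraD[OF injT b10 b1T b0(1)] .
    have "\<nu> b1 < \<nu> x" using le ne b0(2) by simp
    then show ?thesis using e1 e2 by simp
  qed
  then show ?thesis using b0 fT nz by blast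
qed

lemma onedim:
  fixes \<nu> :: "'b \<Rightarrow> 'c::linorder"
  assumes v: "is_valuation scale \<nu>" and B: "adapted_basis scale \<nu> B"
    and x: "x \<noteq> 0" and y: "y \<noteq> 0" and eq: "\<nu> x = \<nu> y"
  shows "\<exists>e. x - scale e y = 0 \<or> \<nu> (x - scale e y) < \<nu> x"
proof -
  have inj: "inj_on \<nu> B" using B unfolding adapted_basis_def by auto
  obtain b0 c where b0: "b0 \<in> B" "c \<noteq> 0" "\<nu> b0 = \<nu> x" "x - scale c b0 = 0 \<or> \<nu> (x - scale c b0) < \<nu> x"
    using decomp[OF v B x] by blast
  obtain b1 d where b1: "b1 \<in> B" "d \<noteq> 0" "\<nu> b1 = \<nu> y" "y - scale d b1 = 0 \<or> \<nu> (y - scale d b1) < \<nu> y"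
    using decomp[OF v B y] by blast
  have "b1 = b0" using inj b0 b1 eq by (metis inj_on_def)
  have "x - scale (c / d) y = (x - scale c b0) - scale (c / d) (y - scale d b1)"
    using \<open>b1 = b0\<close> b1(2) by (simp add: scale_right_diff_distrib)
  moreover have "x - scale c b0 - scale (c / d) (y - scale d b1) = 0 \<or>
      \<nu> (x - scale c b0 - scale (c / d) (y - scale d b1)) < \<nu> x"
    using low_diff[OF v b0(4), of "y - scale d b1" "c / d"] b1(4) eq by simp
  ultimately show ?thesis by metis
qed


lemma basis_from_reps:
  fixes \<nu> :: "'b \<Rightarrow> 'c::linorder"
  assumes v: "is_valuation scale \<nu>" and wo: "well_ordered_valuation \<nu>"
    and iv: "injective_valuation scale \<nu>"
    and nzB: "\<forall>x\<in>B. x \<noteq> 0" and inj: "inj_on \<nu> B"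
    and rep: "\<forall>a\<in>val_image \<nu>. \<exists>b\<in>B. \<nu> b = a"
  shows "is_basis scale B"
proof -
  obtain B0 where B0: "adapted_basis scale \<nu> B0" using iv unfolding injective_valuation_def by blast
  have ind: "\<not> dependent B"
  proof
    assume "dependent B"
    then obtain t u where t: "finite t" "t \<subseteq> B" and s0: "(\<Sum>v\<in>t. scale (u v) v) = 0"
      and ex: "\<exists>v\<in>t. u v \<noteq> 0"
      unfolding dependent_explicit by blast
    define T where "T = {v\<in>t. u v \<noteq> 0}"
    have eq: "(\<Sum>v\<in>t. scale (u v) v) = (\<Sum>v\<in>T. scale (u v) v)" unfolding T_def
      by (rule sum.mono_neutral_right) (use t in auto)
    have fT: "finite T" using t T_def by auto
    have TN: "T \<noteq> {}" using ex T_def by auto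
    have nz: "\<forall>w\<in>T. u w \<noteq> 0 \<and> w \<noteq> 0" using T_def nzB t by auto
    have injT: "inj_on \<nu> T" using inj t T_def by (auto intro: inj_on_subset)
    have "(\<Sum>v\<in>T. scale (u v) v) \<noteq> 0" using val_sum[OF v fT TN, of u] nz injT by blast
    then show False using s0 eq by simp
  qed
  have sp: "x \<in> span B" for x
  proof (rule ccontr)
    assume xn: "x \<notin> span B"
    define X where "X = {\<nu> y | y. y \<notin> span B}"
    have XI: "X \<subseteq> val_image \<nu>" unfolding X_def val_image_def using span_zero by fastforce
    have "X \<noteq> {}" using xn X_def by blast
    then obtain m where m: "m \<in> X" and mmin: "\<forall>c\<in>X. m \<le> c"
      using wo XI unfolding well_ordered_valuation_def well_ordered_set_def by blast
    obtain y where y: "y \<notin> span B" and my: "m = \<nu> y" using m X_def by blast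
    have yn: "y \<noteq> 0" using y span_zero by blast
    obtain b where b: "b \<in> B" and bm: "\<nu> b = m" using rep XI m by blast
    have bn: "b \<noteq> 0" using nzB b by blast
    obtain e where e: "y - scale e b = 0 \<or> \<nu> (y - scale e b) < \<nu> y"
      using onedim[OF v B0 yn bn] bm my by metis
    have nsp: "y - scale e b \<notin> span B"
    proof
      assume "y - scale e b \<in> span B"
      moreover have "scale e b \<in> span B" using b by (intro span_scale span_base)
      ultimately have "(y - scale e b) + scale e b \<in> span B" by (rule span_add)
      then show False using y by simp
    qed
    then have "y - scale e b \<noteq> 0" using span_zero by metis
    then have lt: "\<nu> (y - scale e b) < m" using e my by simp
    have "\<nu> (y - scale e b) \<in> X" using nsp X_def by blast
    then show False using mmin lt by fastforce
  qed
  show ?thesis unfolding is_basis_def using ind sp by blast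
qed

end

lemma min_unique: "is_min_of m A \<Longrightarrow> is_min_of m' A \<Longrightarrow> m = m'"
  unfolding is_min_of_def by (meson antisym)

lemma Kmap_eq: "is_min_of m (fibre_vals \<nu>' \<nu> a) \<Longrightarrow> Kmap \<nu>' \<nu> a = m"
  unfolding Kmap_def by (rule the_equality) (auto intro: min_unique)

lemma fibre_min:
  assumes wo: "well_ordered_valuation \<nu>'" and a: "a \<in> val_image \<nu>"
  shows "\<exists>m. is_min_of m (fibre_vals \<nu>' \<nu> a)"
proof -
  have sub: "fibre_vals \<nu>' \<nu> a \<subseteq> val_image \<nu>'"
    unfolding fibre_vals_def val_image_def by auto
  have ne: "fibre_vals \<nu>' \<nu> a \<noteq> {}" using a unfolding fibre_vals_def val_image_def by auto
  show ?thesis using wo sub ne unfolding well_ordered_valuation_def well_ordered_set_def is_min_of_def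
    by blast
qed

lemma Kmap_props:
  assumes wo: "well_ordered_valuation \<nu>'" and a: "a \<in> val_image \<nu>"
  shows "\<exists>x. x \<noteq> 0 \<and> \<nu> x = a \<and> \<nu>' x = Kmap \<nu>' \<nu> a"
    and "\<And>y. y \<noteq> 0 \<Longrightarrow> \<nu> y = a \<Longrightarrow> Kmap \<nu>' \<nu> a \<le> \<nu>' y"
proof -
  obtain m where m: "is_min_of m (fibre_vals \<nu>' \<nu> a)" using fibre_min[OF wo a] by blast
  have K: "Kmap \<nu>' \<nu> a = m" using Kmap_eq[OF m] .
  show "\<exists>x. x \<noteq> 0 \<and> \<nu> x = a \<and> \<nu>' x = Kmap \<nu>' \<nu> a"
    using m unfolding K is_min_of_def fibre_vals_def by auto
  show "Kmap \<nu>' \<nu> a \<le> \<nu>' y" if "y \<noteq> 0" "\<nu> y = a" for y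
    using m that unfolding K is_min_of_def fibre_vals_def by auto
qed


context vector_space begin

lemma K_inv:
  fixes \<nu> :: "'b \<Rightarrow> 'c::linorder" and \<nu>' :: "'b \<Rightarrow> 'd::linorder"
  assumes v: "is_valuation scale \<nu>" and v': "is_valuation scale \<nu>'"
    and wo': "well_ordered_valuation \<nu>'" and iv': "injective_valuation scale \<nu>'"
    and a: "a \<in> val_image \<nu>"
  shows "is_min_of a (fibre_vals \<nu> \<nu>' (Kmap \<nu>' \<nu> a))"
proof -
  obtain B' where B': "adapted_basis scale \<nu>' B'" using iv' unfolding injective_valuation_def by blast
  obtain x0 where x0: "x0 \<noteq> 0" "\<nu> x0 = a" "\<nu>' x0 = Kmap \<nu>' \<nu> a"
    using Kmap_props(1)[OF wo' a] by blast
  note kmin = Kmap_props(2)[OF wo' a]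
  define b where "b = Kmap \<nu>' \<nu> a"
  have mem: "a \<in> fibre_vals \<nu> \<nu>' b" unfolding fibre_vals_def b_def using x0 by auto
  have "a \<le> c" if c: "c \<in> fibre_vals \<nu> \<nu>' b" for c
  proof (rule ccontr)
    assume "\<not> a \<le> c"
    then have ca: "c < a" by simp
    obtain y where y: "y \<noteq> 0" "\<nu>' y = b" "c = \<nu> y" using c unfolding fibre_vals_def by blast
    obtain e where e: "x0 - scale e y = 0 \<or> \<nu>' (x0 - scale e y) < \<nu>' x0"
      using onedim[OF v' B' x0(1) y(1)] x0(3) y(2) b_def by metis
    show False
    proof (cases "x0 - scale e y = 0")
      case True
      then have x0e: "x0 = scale e y" by simp
      then have "e \<noteq> 0" using x0(1) by auto
      then have "\<nu> x0 = \<nu> y" using x0e val_scale[OF v _ y(1)] by simp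
      then show False using ca x0(2) y(3) by simp
    next
      case False
      then have lt: "\<nu>' (x0 - scale e y) < b" using e x0(3) b_def by simp
      show False
      proof (cases "e = 0")
        case True then show False using lt x0(3) b_def by simp
      next
        case en: False
        define w where "w = - scale e y"
        have wn: "w \<noteq> 0" unfolding w_def using en y(1) by simp
        have "\<nu> w = \<nu> y" unfolding w_def using val_neg[OF v] val_scale[OF v en y(1)] en y(1) by simp
        then have "\<nu> w < \<nu> x0" using ca x0(2) y(3) by simp
        then have "\<nu> (x0 + w) = \<nu> x0" using val_add_lt[OF v x0(1) wn] by blast
        then have "\<nu> (x0 - scale e y) = a" unfolding w_def using x0(2) by simp
        then have "b \<le> \<nu>' (x0 - scale e y)" using kmin[OF False] b_def by simp
        then show False using lt by simp
      qed
    qed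
  qed
  then show ?thesis unfolding is_min_of_def b_def[symmetric] using mem by blast
qed

end

lemma K_in:
  assumes wo': "well_ordered_valuation \<nu>'" and a: "a \<in> val_image \<nu>"
  shows "Kmap \<nu>' \<nu> a \<in> val_image \<nu>'"
  using Kmap_props(1)[OF wo' a] unfolding val_image_def by force

theorem mainTheorem1:
  fixes scale :: "'k::field \<Rightarrow> 'v::ab_group_add \<Rightarrow> 'v"
    and \<nu> :: "'v \<Rightarrow> 'c::linorder"
    and \<nu>' :: "'v \<Rightarrow> 'd::linorder"
  assumes "vector_space scale"
    and "is_valuation scale \<nu>" and "well_ordered_valuation \<nu>" and "injective_valuation scale \<nu>"
    and "is_valuation scale \<nu>'" and "well_ordered_valuation \<nu>'" and "injective_valuation scale \<nu>'"
  shows "(\<forall>a\<in>val_image \<nu>. \<exists>m. is_min_of m (fibre_vals \<nu>' \<nu> a))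
       \<and> (\<forall>a\<in>val_image \<nu>'. \<exists>m. is_min_of m (fibre_vals \<nu> \<nu>' a))
       \<and> bij_betw (Kmap \<nu>' \<nu>) (val_image \<nu>) (val_image \<nu>')
       \<and> bij_betw (Kmap \<nu> \<nu>') (val_image \<nu>') (val_image \<nu>)
       \<and> (\<forall>a\<in>val_image \<nu>. Kmap \<nu> \<nu>' (Kmap \<nu>' \<nu> a) = a)
       \<and> (\<forall>a\<in>val_image \<nu>'. Kmap \<nu>' \<nu> (Kmap \<nu> \<nu>' a) = a)
       \<and> (\<exists>B. adapted_basis scale \<nu> B \<and> adapted_basis scale \<nu>' B
              \<and> (\<forall>b\<in>B. Kmap \<nu>' \<nu> (\<nu> b) = \<nu>' b))"
proof -
  note vs = assms(1)
  have P1: "\<forall>a\<in>val_image \<nu>. \<exists>m. is_min_of m (fibre_vals \<nu>' \<nu> a)"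
    by (intro ballI fibre_min[OF assms(6)])
  have P2: "\<forall>a\<in>val_image \<nu>'. \<exists>m. is_min_of m (fibre_vals \<nu> \<nu>' a)"
    by (intro ballI fibre_min[OF assms(3)])
  have I1: "\<forall>a\<in>val_image \<nu>. Kmap \<nu> \<nu>' (Kmap \<nu>' \<nu> a) = a"
    using Kmap_eq[OF vector_space.K_inv[OF vs assms(2,5,6,7)]] by blast
  have I2: "\<forall>a\<in>val_image \<nu>'. Kmap \<nu>' \<nu> (Kmap \<nu> \<nu>' a) = a"
    using Kmap_eq[OF vector_space.K_inv[OF vs assms(5,2,3,4)]] by blast
  have S1: "Kmap \<nu>' \<nu> ` val_image \<nu> \<subseteq> val_image \<nu>'" by (intro image_subsetI K_in[OF assms(6)])
  have S2: "Kmap \<nu> \<nu>' ` val_image \<nu>' \<subseteq> val_image \<nu>" by (intro image_subsetI K_in[OF assms(3)])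
  have B1: "bij_betw (Kmap \<nu>' \<nu>) (val_image \<nu>) (val_image \<nu>')"
    by (rule bij_betw_byWitness[OF I1 I2 S1 S2])
  have B2: "bij_betw (Kmap \<nu> \<nu>') (val_image \<nu>') (val_image \<nu>)"
    by (rule bij_betw_byWitness[OF I2 I1 S2 S1])
  define xa where "xa a = (SOME x. x \<noteq> 0 \<and> \<nu> x = a \<and> \<nu>' x = Kmap \<nu>' \<nu> a)" for a
  have xa: "xa a \<noteq> 0 \<and> \<nu> (xa a) = a \<and> \<nu>' (xa a) = Kmap \<nu>' \<nu> a" if "a \<in> val_image \<nu>" for a
    unfolding xa_def by (rule someI_ex) (rule Kmap_props(1)[OF assms(6) that])
  define B where "B = xa ` val_image \<nu>"
  have nzB: "\<forall>x\<in>B. x \<noteq> 0"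
  proof
    fix p assume "p \<in> B"
    then obtain a where a: "a \<in> val_image \<nu>" "p = xa a" using B_def by blast
    show "p \<noteq> 0" using xa[OF a(1)] a(2) by simp
  qed
  have inj: "inj_on \<nu> B"
  proof (rule inj_onI)
    fix p q assume p: "p \<in> B" and q: "q \<in> B" and pq: "\<nu> p = \<nu> q"
    obtain a1 where a1: "a1 \<in> val_image \<nu>" "p = xa a1" using p B_def by blast
    obtain a2 where a2: "a2 \<in> val_image \<nu>" "q = xa a2" using q B_def by blast
    have "a1 = a2" using pq xa[OF a1(1)] xa[OF a2(1)] a1(2) a2(2) by simp
    then show "p = q" using a1 a2 by simp
  qed
  have inj': "inj_on \<nu>' B"
  proof (rule inj_onI)
    fix p q assume p: "p \<in> B" and q: "q \<in> B" and pq: "\<nu>' p = \<nu>' q"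
    obtain a1 where a1: "a1 \<in> val_image \<nu>" "p = xa a1" using p B_def by blast
    obtain a2 where a2: "a2 \<in> val_image \<nu>" "q = xa a2" using q B_def by blast
    have "Kmap \<nu>' \<nu> a1 = Kmap \<nu>' \<nu> a2" using pq xa[OF a1(1)] xa[OF a2(1)] a1 a2 by simp
    then have "a1 = a2" using I1 a1(1) a2(1) by metis
    then show "p = q" using a1 a2 by simp
  qed
  have rep: "\<forall>a\<in>val_image \<nu>. \<exists>b\<in>B. \<nu> b = a"
  proof
    fix a assume a: "a \<in> val_image \<nu>"
    then have "xa a \<in> B" unfolding B_def by (rule imageI)
    then show "\<exists>b\<in>B. \<nu> b = a" using xa[OF a] by blast
  qed
  have bas: "is_basis scale B"
    using vector_space.basis_from_reps[OF vs assms(2,3,4) nzB inj rep] .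
  have KB: "\<forall>b\<in>B. Kmap \<nu>' \<nu> (\<nu> b) = \<nu>' b"
  proof
    fix p assume "p \<in> B"
    then obtain a where a: "a \<in> val_image \<nu>" "p = xa a" using B_def by blast
    show "Kmap \<nu>' \<nu> (\<nu> p) = \<nu>' p" using xa[OF a(1)] a(2) by simp
  qed
  have "\<exists>B. adapted_basis scale \<nu> B \<and> adapted_basis scale \<nu>' B \<and> (\<forall>b\<in>B. Kmap \<nu>' \<nu> (\<nu> b) = \<nu>' b)"
    using bas inj inj' KB unfolding adapted_basis_def by blast
  then show ?thesis using P1 P2 B1 B2 I1 I2 by blast
qed

end
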